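(* For every $m\in\mathbb N$ there exists a ReLU neural network $\varphi_m^{\exp}\in\widetilde\Phi(m^2\log^2m,\ m\log m,\ m^3\log^3m,\ 1)$ with $|\varphi^{\exp}_m(x)-e^{-x}|\le2^{-m}$ for all $x\ge0$.
   Context: ReLU networks are maps $x\mapsto A_L\sigma_{b_L}\cdots A_1\sigma_{b_1}A_0x$ with $\sigma_b(x)=((x_j-b_j)\vee0)_j$. $\widetilde\Phi(\tilde L,\tilde W,\tilde S,\tilde B)$ is the class of such networks with depth $\lesssim\tilde L$, maximal layer width $\lesssim\tilde W$, number of nonzero weights/biases $\lesssim\tilde S$ and all parameters bounded in absolute value by a quantity $\lesssim\tilde B$, with constants independent of $m$. *)

theory Defs
  imports Complex_Main
begin

text \<open>Vectors in R^d are functions nat => real (only entries j < d matter);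
  a d'-by-d matrix is a function nat => nat => real (only entries i < d', j < d matter).\<close>

definition matvec :: "(nat \<Rightarrow> nat \<Rightarrow> real) \<Rightarrow> nat \<Rightarrow> (nat \<Rightarrow> real) \<Rightarrow> (nat \<Rightarrow> real)" where
  "matvec A d v = (\<lambda>i. \<Sum>j<d. A i j * v j)"

definition sigma_shift :: "(nat \<Rightarrow> real) \<Rightarrow> (nat \<Rightarrow> real) \<Rightarrow> (nat \<Rightarrow> real)" where
  "sigma_shift b v = (\<lambda>j. max (v j - b j) 0)"

fun hidden_layers :: "nat list \<Rightarrow> (nat \<Rightarrow> nat \<Rightarrow> real) list \<Rightarrow> (nat \<Rightarrow> real) list
    \<Rightarrow> (nat \<Rightarrow> real) \<Rightarrow> (nat \<Rightarrow> real)" where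
  "hidden_layers (d # ds) (A # As) (b # bs) v = hidden_layers ds As bs (matvec A d (sigma_shift b v))"
| "hidden_layers _ _ _ v = v"

text \<open>A ReLU network with input/output dimension 1 is given by widths ds = [d_0,...,d_(L+1)],
  matrices As = [A_0,...,A_L] (A_k is d_(k+1) x d_k) and biases bs = [b_1,...,b_L] (b_k in R^(d_k)).\<close>
definition relu_net :: "nat list \<Rightarrow> (nat \<Rightarrow> nat \<Rightarrow> real) list \<Rightarrow> (nat \<Rightarrow> real) list \<Rightarrow> bool" where
  "relu_net ds As bs \<longleftrightarrow> length As = length bs + 1 \<and> length ds = length As + 1
     \<and> hd ds = 1 \<and> last ds = 1"

text \<open>Realisation x |-> A_L sigma_(b_L) ... A_1 sigma_(b_1) A_0 x  (scalar in, scalar out).\<close>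
definition realize :: "nat list \<Rightarrow> (nat \<Rightarrow> nat \<Rightarrow> real) list \<Rightarrow> (nat \<Rightarrow> real) list \<Rightarrow> real \<Rightarrow> real" where
  "realize ds As bs x = hidden_layers (tl ds) (tl As) bs (matvec (hd As) (hd ds) (\<lambda>_. x)) 0"

definition net_depth :: "(nat \<Rightarrow> real) list \<Rightarrow> nat" where
  "net_depth bs = length bs"

definition net_width :: "nat list \<Rightarrow> nat" where
  "net_width ds = Max (set ds)"

definition net_size :: "nat list \<Rightarrow> (nat \<Rightarrow> nat \<Rightarrow> real) list \<Rightarrow> (nat \<Rightarrow> real) list \<Rightarrow> nat" where
  "net_size ds As bs =
     (\<Sum>k<length As. card {(i, j). i < ds ! (k + 1) \<and> j < ds ! k \<and> (As ! k) i j \<noteq> 0})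
   + (\<Sum>k<length bs. card {j. j < ds ! (k + 1) \<and> (bs ! k) j \<noteq> 0})"

definition params_bounded :: "nat list \<Rightarrow> (nat \<Rightarrow> nat \<Rightarrow> real) list \<Rightarrow> (nat \<Rightarrow> real) list \<Rightarrow> real \<Rightarrow> bool" where
  "params_bounded ds As bs B \<longleftrightarrow>
     (\<forall>k<length As. \<forall>i<ds ! (k + 1). \<forall>j<ds ! k. \<bar>(As ! k) i j\<bar> \<le> B)
   \<and> (\<forall>k<length bs. \<forall>j<ds ! (k + 1). \<bar>(bs ! k) j\<bar> \<le> B)"

end

theory Submission
  imports Defs
begin


definition st :: "real \<Rightarrow> real \<Rightarrow> real \<Rightarrow> real \<Rightarrow> nat \<Rightarrow> real" where
  "st a b c d = (\<lambda>i. if i = 0 then a else if i = 1 then b else if i = 2 then c else d)"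

definition lay :: "(nat \<Rightarrow> nat \<Rightarrow> real) \<Rightarrow> (nat \<Rightarrow> real) \<Rightarrow> (nat \<Rightarrow> real) \<Rightarrow> nat \<Rightarrow> real" where
  "lay A b v = matvec A 4 (sigma_shift b v)"

definition run :: "((nat \<Rightarrow> nat \<Rightarrow> real) \<times> (nat \<Rightarrow> real)) list \<Rightarrow> (nat \<Rightarrow> real) \<Rightarrow> nat \<Rightarrow> real" where
  "run ps v = fold (\<lambda>p w. lay (fst p) (snd p) w) ps v"

lemma matvec4: "matvec A 4 v = (\<lambda>i. A i 0 * v 0 + A i 1 * v 1 + A i 2 * v 2 + A i 3 * v 3)"
  by (simp add: matvec_def eval_nat_numeral)

lemma hidden_run: "hidden_layers (replicate (length ps) 4 @ [1]) (map fst ps) (map snd ps) v = run ps v"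
proof (induction ps arbitrary: v)
  case Nil then show ?case by (simp add: run_def)
next
  case (Cons p ps) then show ?case by (simp add: run_def lay_def)
qed

lemma run_append: "run (xs @ ys) v = run ys (run xs v)"
  by (simp add: run_def)
lemma run_Cons: "run (p # ys) v = run ys (lay (fst p) (snd p) v)"
  by (simp add: run_def)
lemma run_Nil: "run [] v = v"
  by (simp add: run_def)

definition gg :: "real \<Rightarrow> real" where "gg u = 2*u - 4 * max (u - 1/2) 0"

lemma gg_range: "0 \<le> u \<Longrightarrow> u \<le> 1 \<Longrightarrow> 0 \<le> gg u \<and> gg u \<le> 1"
  by (auto simp: gg_def max_def)

lemma gg_id: "0 \<le> u \<Longrightarrow> u \<le> 1 \<Longrightarrow> 4*(u - u^2) - gg u = gg u - (gg u)^2"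
  by (auto simp: gg_def max_def power2_eq_square algebra_simps)

lemma ggn_range: "0 \<le> u \<Longrightarrow> u \<le> 1 \<Longrightarrow> 0 \<le> (gg^^n) u \<and> (gg^^n) u \<le> 1"
  by (induction n) (auto simp: gg_range)

definition sawA :: "nat \<Rightarrow> nat \<Rightarrow> nat \<Rightarrow> real" where
  "sawA j = (\<lambda>i k. if i = 0 then (if k = 0 then 1 else 0)
      else if i \<le> 2 then (if k = 1 then 2 else if k = 2 then -4 else 0)
      else (if k = 1 then 2/4^j else if k = 2 then -4/4^j else if k = 3 then 1 else 0))"
definition "sawb = st 0 0 (1/2) 0"
definition finA :: "nat \<Rightarrow> nat \<Rightarrow> real" where
  "finA = (\<lambda>i k. if k = 0 then 1 else if k = 3 then -1 else 0)"
definition "finb = st 0 0 0 0"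
definition clA :: "nat \<Rightarrow> nat \<Rightarrow> real" where
  "clA = (\<lambda>i k. if i \<le> 2 then (if k = 0 then 1 else if k = 3 then -1 else 0) else 0)"
definition "clb = st 0 0 0 1"
definition inA :: "nat \<Rightarrow> nat \<Rightarrow> real" where
  "inA = (\<lambda>i k. if i \<le> 2 then (if k = 0 then -1 else if k = 1 then 1 else if k = 2 then 1 else 0) else 0)"
definition "inb d = st 0 d (-1) 0"

lemma lay_saw: assumes "t \<ge> 0" "u \<ge> 0" "S \<ge> 0"
  shows "lay (sawA j) sawb (st t u u S) = st t (gg u) (gg u) (S + gg u / 4^j)"
  using assms by (auto simp: lay_def matvec4 sigma_shift_def st_def sawA_def sawb_def gg_def
       max_def field_simps)

lemma lay_fin: assumes "t \<ge> 0" "u \<ge> 0" "S \<ge> 0"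
  shows "lay finA finb (st t u u S) = st (t-S) (t-S) (t-S) (t-S)"
  using assms by (auto simp: lay_def matvec4 sigma_shift_def st_def finA_def finb_def)

lemma lay_cl: assumes "f \<ge> 0"
  shows "lay clA clb (st f f f f) = st (min f 1) (min f 1) (min f 1) 0"
  using assms by (auto simp: lay_def matvec4 sigma_shift_def st_def clA_def clb_def max_def min_def)

lemma lay_in: assumes "a \<ge> 0"
  shows "lay inA (inb d) (st a a 0 0) = st (1 - a + max (a - d) 0) (1 - a + max (a - d) 0) (1 - a + max (a - d) 0) 0"
  using assms by (auto simp: lay_def matvec4 sigma_shift_def st_def inA_def inb_def)



definition sawL :: "nat \<Rightarrow> ((nat \<Rightarrow> nat \<Rightarrow> real) \<times> (nat \<Rightarrow> real)) list" where
  "sawL n = map (\<lambda>j. (sawA j, sawb)) [1..<Suc n]"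

lemma run_sawL: assumes "t \<ge> 0" "0 \<le> u" "u \<le> 1" "S \<ge> 0"
  shows "run (sawL n) (st t u u S) = st t ((gg^^n) u) ((gg^^n) u) (S + (\<Sum>j\<in>{1..n}. (gg^^j) u / 4^j))"
proof (induction n)
  case 0 then show ?case by (simp add: sawL_def run_Nil)
next
  case (Suc n)
  have e: "sawL (Suc n) = sawL n @ [(sawA (Suc n), sawb)]" by (simp add: sawL_def)
  have r: "0 \<le> (gg^^n) u" using ggn_range assms by blast
  have s: "0 \<le> S + (\<Sum>j\<in>{1..n}. (gg^^j) u / 4^j)"
    using assms ggn_range by (intro add_nonneg_nonneg sum_nonneg) auto
  show ?case unfolding e run_append Suc
    using lay_saw[OF assms(1) r s, of "Suc n"] by (simp add: run_Cons run_Nil add.assoc)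
qed

lemma sq_ident: assumes "0 \<le> t" "t \<le> 1"
  shows "t - (\<Sum>j\<in>{1..n}. (gg^^j) t / 4^j) = t^2 + ((gg^^n) t - ((gg^^n) t)^2) / 4^n"
proof (induction n)
  case 0 then show ?case by simp
next
  case (Suc n)
  define u where "u = (gg^^n) t"
  have ur: "0 \<le> u" "u \<le> 1" using ggn_range assms u_def by auto
  have id: "4*(u - u^2) - gg u = gg u - (gg u)^2" using gg_id ur by blast
  have "t - (\<Sum>j\<in>{1..Suc n}. (gg^^j) t / 4^j) = t - (\<Sum>j\<in>{1..n}. (gg^^j) t / 4^j) - gg u / 4^Suc n"
    by (simp add: u_def)
  also have "\<dots> = t^2 + (u - u^2)/4^n - gg u / 4^Suc n" using Suc u_def by simp
  also have "\<dots> = t^2 + (4*(u - u^2) - gg u) / 4^Suc n" by (simp add: field_simps)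
  also have "\<dots> = t^2 + ((gg^^Suc n) t - ((gg^^Suc n) t)^2) / 4^Suc n" using id by (simp add: u_def)
  finally show ?case .
qed

definition sq :: "nat \<Rightarrow> real \<Rightarrow> real" where
  "sq n t = min (t - (\<Sum>j\<in>{1..n}. (gg^^j) t / 4^j)) 1"

lemma sq_bounds: assumes "0 \<le> t" "t \<le> 1"
  shows "0 \<le> t - (\<Sum>j\<in>{1..n}. (gg^^j) t / 4^j)" "t^2 \<le> sq n t" "sq n t \<le> t^2 + 1/4^(n+1)"
    "0 \<le> sq n t" "sq n t \<le> 1"
proof -
  define u where "u = (gg^^n) t"
  have ur: "0 \<le> u" "u \<le> 1" using ggn_range assms u_def by auto
  have q0: "0 \<le> u - u^2" using ur by (simp add: power2_eq_square mult_left_le)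
  have q1: "u - u^2 \<le> 1/4" using zero_le_power2[of "u - 1/2"] by (simp add: power2_eq_square algebra_simps)
  have e: "t - (\<Sum>j\<in>{1..n}. (gg^^j) t / 4^j) = t^2 + (u - u^2)/4^n" using sq_ident assms u_def by simp
  have t2: "t^2 \<le> 1" using assms by (simp add: power_le_one)
  have a: "0 \<le> (u - u^2)/4^n" using q0 by simp
  have b: "(u - u^2)/4^n \<le> 1/4^(n+1)"
  proof -
    have "(u - u^2)/4^n \<le> (1/4)/4^n" using q1 by (intro divide_right_mono) auto
    then show ?thesis by simp
  qed
  show "0 \<le> t - (\<Sum>j\<in>{1..n}. (gg^^j) t / 4^j)" using e a by simp
  show "t^2 \<le> sq n t" using e a t2 by (simp add: sq_def)
  show "sq n t \<le> t^2 + 1/4^(n+1)" using e b by (simp add: sq_def)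
  show "0 \<le> sq n t" using e a by (simp add: sq_def)
  show "sq n t \<le> 1" by (simp add: sq_def)
qed

definition blk :: "nat \<Rightarrow> ((nat \<Rightarrow> nat \<Rightarrow> real) \<times> (nat \<Rightarrow> real)) list" where
  "blk n = sawL n @ [(finA, finb), (clA, clb)]"

lemma run_blk: assumes "0 \<le> t" "t \<le> 1"
  shows "run (blk n) (st t t t 0) = st (sq n t) (sq n t) (sq n t) 0"
proof -
  have s: "0 \<le> (\<Sum>j\<in>{1..n}. (gg^^j) t / 4^j)" using assms ggn_range by (intro sum_nonneg) auto
  have r: "0 \<le> (gg^^n) t" using ggn_range assms by blast
  have f: "0 \<le> t - (\<Sum>j\<in>{1..n}. (gg^^j) t / 4^j)" using sq_bounds(1) assms by blast
  have "run (blk n) (st t t t 0) = run [(finA, finb), (clA, clb)] (run (sawL n) (st t t t 0))"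
    unfolding blk_def run_append ..
  also have "run (sawL n) (st t t t 0) = st t ((gg^^n) t) ((gg^^n) t) (\<Sum>j\<in>{1..n}. (gg^^j) t / 4^j)"
    using run_sawL[of t t 0 n] assms by simp
  finally show ?thesis
    by (simp only: run_Cons run_Nil fst_conv snd_conv lay_fin[OF assms(1) r s] lay_cl[OF f] sq_def)
qed

lemma run_blks: assumes "0 \<le> t" "t \<le> 1"
  shows "run (concat (replicate k (blk n))) (st t t t 0) = st ((sq n^^k) t) ((sq n^^k) t) ((sq n^^k) t) 0"
  using assms
proof (induction k arbitrary: t)
  case 0 then show ?case by (simp add: run_Nil)
next
  case (Suc k)
  have "0 \<le> sq n t" "sq n t \<le> 1" using sq_bounds Suc.prems by auto
  then show ?case using Suc by (simp add: run_append run_blk funpow_Suc_right del: funpow.simps)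
qed

lemma sq_iter: assumes "0 \<le> t" "t \<le> 1"
  shows "0 \<le> (sq n^^i) t \<and> (sq n^^i) t \<le> 1 \<and> t^(2^i) \<le> (sq n^^i) t
     \<and> (sq n^^i) t \<le> t^(2^i) + (2^i - 1) / 4^(n+1)"
proof (induction i)
  case 0 then show ?case using assms by simp
next
  case (Suc i)
  define c where "c = (sq n^^i) t"
  define e where "e = t^(2^i)"
  define ep :: real where "ep = 1/4^(n+1)"
  have h: "0 \<le> c" "c \<le> 1" "e \<le> c" "c \<le> e + (2^i - 1) * ep"
    using Suc by (auto simp: c_def e_def ep_def)
  have e0: "0 \<le> e" using assms by (simp add: e_def)
  have sb: "c^2 \<le> sq n c" "sq n c \<le> c^2 + ep" "0 \<le> sq n c" "sq n c \<le> 1"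
    using sq_bounds[OF h(1,2)] by (auto simp: ep_def)
  have t2: "t^(2*2^i) = e^2" by (simp add: e_def power_mult[symmetric] mult.commute)
  have "e^2 \<le> c^2" using e0 h by (simp add: power_mono)
  moreover have "c^2 - e^2 \<le> 2*(c - e)"
  proof -
    have "c^2 - e^2 = (c - e)*(c + e)" by (simp add: power2_eq_square algebra_simps)
    also have "\<dots> \<le> (c - e) * 2" using h e0 by (intro mult_left_mono) auto
    finally show ?thesis by simp
  qed
  moreover have "2*(c-e) \<le> 2*((2^i-1)*ep)" using h by simp
  ultimately have "e^2 \<le> sq n c" "sq n c \<le> e^2 + (2^Suc i - 1) * ep"
    using sb h by (auto simp: algebra_simps)
  then show ?case using sb by (simp add: c_def[symmetric] t2 ep_def)
qed

lemma pow_diff: "0 \<le> b \<Longrightarrow> b \<le> a \<Longrightarrow> a \<le> (1::real) \<Longrightarrow> a^N - b^N \<le> N*(a-b)"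
proof (induction N)
  case 0 then show ?case by simp
next
  case (Suc N)
  have "a^Suc N - b^Suc N = a*(a^N - b^N) + (a-b)*b^N" by (simp add: algebra_simps)
  also have "\<dots> \<le> (a^N - b^N) + (a - b)"
  proof (intro add_mono)
    have "0 \<le> a^N - b^N" using Suc.prems by (simp add: power_mono)
    then show "a*(a^N - b^N) \<le> a^N - b^N" using Suc.prems by (simp add: mult_left_le_one_le)
    show "(a-b)*b^N \<le> a - b" using Suc.prems by (simp add: mult_left_le power_le_one)
  qed
  also have "\<dots> \<le> Suc N * (a - b)" using Suc by (simp add: algebra_simps)
  finally show ?case .
qed

lemma exp_approx: assumes "0 \<le> y" "y \<le> 1"
  shows "\<bar>(1-y)^N - exp(-(real N*y))\<bar> \<le> real N * y^2"
proof -
  define a where "a = exp(-y)"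
  have ea: "exp(-(real N*y)) = a^N" unfolding a_def using exp_of_nat_mult[of N "-y"] by simp
  have ba: "1 - y \<le> a" unfolding a_def using exp_ge_add_one_self[of "-y"] by simp
  have a1: "a \<le> 1" using assms by (simp add: a_def)
  have "a \<le> 1/(1+y)"
  proof -
    have "1 + y \<le> exp y" by simp
    then have "1/exp y \<le> 1/(1+y)" using assms by (intro divide_left_mono) auto
    then show ?thesis by (simp add: a_def exp_minus field_simps)
  qed
  moreover have "1/(1+y) - (1-y) \<le> y^2"
  proof -
    have "1/(1+y) - (1-y) = y^2/(1+y)" using assms by (simp add: field_simps power2_eq_square)
    also have "\<dots> \<le> y^2" using assms by (intro divide_left_mono[of 1 "1+y" "y^2", simplified]) auto
    finally show ?thesis .
  qed
  ultimately have d: "a - (1-y) \<le> y^2" by simp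
  have p: "a^N - (1-y)^N \<le> N*(a - (1-y))" using pow_diff[OF _ ba a1] assms by simp
  have "(1-y)^N \<le> a^N" using ba assms by (simp add: power_mono)
  then show ?thesis using p d ea
    by (smt (verit) mult_left_mono of_nat_0_le_iff)
qed



lemma pow_facts: fixes m :: nat
  shows "(2::real)^(3*m+4) = 16 * (2^m)^3" "(4::real)^(2*m+2+1) = 64 * (2^m)^4"
proof -
  show "(2::real)^(3*m+4) = 16 * (2^m)^3"
    by (simp add: power_add power_mult[symmetric] mult.commute)
  have "(4::real)^(2*m+2+1) = 64 * (4^m)^2"
    by (simp add: power_add power_mult[symmetric] mult.commute)
  also have "(4::real)^m = (2^m)^2"
  proof -
    have "(4::real)^m = (2^2)^m" by simp
    also have "\<dots> = (2^m)^2" by (metis power_mult mult.commute)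
    finally show ?thesis .
  qed
  finally show "(4::real)^(2*m+2+1) = 64 * (2^m)^4" by simp
qed

lemma final_err:
  fixes m :: nat and x :: real
  assumes m: "m \<ge> 2" and x: "x \<ge> 0"
  defines "N \<equiv> (2::real)^(3*m+4)"
  defines "d \<equiv> 2 * real m / N"
  shows "\<bar>(sq (2*m+2) ^^ (3*m+4)) (1 - min (x/N) d) - exp (-x)\<bar> \<le> 1 / 2^m"
proof -
  define P :: real where "P = 2^m"
  define k where "k = 3*m+4"
  define n where "n = 2*m+2"
  define y where "y = min (x/N) d"
  define z where "z = 1 - y"
  have mP: "real m \<le> P" unfolding P_def
    by (metis less_exp of_nat_le_iff of_nat_less_imp_less order_less_imp_le of_nat_numeral of_nat_power)
  have P4: "4 \<le> P" unfolding P_def using power_increasing[OF m, of "2::real"] by simp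
  have NP: "N = 16*P^3" unfolding N_def P_def using pow_facts by simp
  have Npos: "N > 0" using NP P4 by simp
  have dle: "d \<le> 1"
  proof -
    have "1 \<le> P*P" using P4 mult_mono[of 1 P 1 P] by simp
    then have h: "P*1 \<le> P*(P*P)" using P4 by (intro mult_left_mono) auto
    have "2 * real m \<le> 16 * P^3" unfolding power3_eq_cube using mP P4 h
      by (simp only: mult.assoc mult_1_right)
    then show ?thesis unfolding d_def NP using P4 by (simp add: field_simps)
  qed
  have d0: "0 \<le> d" unfolding d_def using Npos by simp
  have y0: "0 \<le> y" "y \<le> d" unfolding y_def using x Npos d0 by auto
  have z: "0 \<le> z" "z \<le> 1" using y0 dle by (auto simp: z_def)
  define c where "c = (sq n ^^ k) z"
  have si: "z^(2^k) \<le> c" "c \<le> z^(2^k) + (2^k - 1) / 4^(n+1)"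
    using sq_iter[OF z, where n=n and i=k] by (auto simp: c_def)
  have Nk: "(2::real)^k = N" by (simp add: k_def N_def)
  have e1: "\<bar>c - z^(2^k)\<bar> \<le> 1/(4*P)"
  proof -
    have "(2^k - 1) / 4^(n+1) \<le> (N::real) / 4^(n+1)" using Nk by (intro divide_right_mono) auto
    also have "\<dots> = 16*P^3 / (64 * P^4)" using pow_facts NP by (simp add: n_def P_def)
    also have "\<dots> = 1/(4*P)" using P4 by (simp add: field_simps power_def eval_nat_numeral)
    finally show ?thesis using si by simp
  qed
  have e2: "\<bar>z^(2^k) - exp (-(N*y))\<bar> \<le> 1/(4*P)"
  proof -
    have "\<bar>(1-y)^(2^k) - exp(-(real (2^k)*y))\<bar> \<le> real (2^k) * y^2"
      using exp_approx[of y "2^k"] y0 dle by simp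
    then have "\<bar>z^(2^k) - exp (-(N*y))\<bar> \<le> N * y^2" using Nk by (simp add: z_def)
    also have "\<dots> \<le> N * d^2" using y0 Npos by (intro mult_left_mono power_mono) auto
    also have "\<dots> = 4 * real m^2 / N" unfolding d_def using Npos by (simp add: field_simps power2_eq_square)
    also have "\<dots> \<le> 1/(4*P)"
    proof -
      have "real m^2 \<le> P^2" using mP by (simp add: power_mono)
      then have "16 * real m^2 * P \<le> 16*P^3" using P4 by (simp add: power2_eq_square power3_eq_cube)
      then show ?thesis using NP P4 Npos by (simp add: field_simps)
    qed
    finally show ?thesis .
  qed
  have e3: "\<bar>exp (-(N*y)) - exp (-x)\<bar> \<le> 1/(4*P)"
  proof (cases "x/N \<le> d")
    case True
    then have "N*y = x" unfolding y_def using Npos by simp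
    then show ?thesis using P4 by simp
  next
    case False
    then have Ny: "N*y = 2*real m" unfolding y_def d_def using Npos by simp
    have xg: "2*real m < x" using False unfolding d_def using Npos by (simp add: field_simps)
    have em: "P \<le> exp (real m)"
    proof -
      have "(2::real) \<le> exp 1" using exp_ge_add_one_self[of "1::real"] by simp
      then have "2^m \<le> exp (1::real)^m" by (intro power_mono) auto
      then show ?thesis using exp_of_nat_mult[of m "1::real"] by (simp add: P_def)
    qed
    have "4*P \<le> P*P" using P4 by simp
    also have "\<dots> \<le> exp (real m) * exp (real m)" using em P4 by (intro mult_mono) auto
    also have "\<dots> = exp (2*real m)" by (simp add: exp_add[symmetric])
    finally have "4*P \<le> exp (2*real m)" .
    then have "exp (-(2*real m)) \<le> 1/(4*P)" using P4 by (simp add: exp_minus field_simps)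
    moreover have "exp (-x) \<le> exp (-(2*real m))" using xg by simp
    moreover have "0 < exp (-x)" by simp
    ultimately show ?thesis unfolding Ny by linarith
  qed
  have "\<bar>c - exp(-x)\<bar> \<le> 3/(4*P)" using e1 e2 e3 by simp
  also have "\<dots> \<le> 1/P" using P4 by (simp add: field_simps)
  finally show ?thesis by (simp add: c_def k_def n_def z_def y_def P_def)
qed



definition netps :: "nat \<Rightarrow> ((nat \<Rightarrow> nat \<Rightarrow> real) \<times> (nat \<Rightarrow> real)) list" where
  "netps m = (inA, inb (2 * real m / 2^(3*m+4))) # concat (replicate (3*m+4) (blk (2*m+2)))"
definition A0 :: "nat \<Rightarrow> nat \<Rightarrow> nat \<Rightarrow> real" where
  "A0 m = (\<lambda>i j. if i \<le> 1 then 1 / 2^(3*m+4) else 0)"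
definition netds :: "nat \<Rightarrow> nat list" where "netds m = 1 # replicate (length (netps m)) 4 @ [1]"
definition "netAs m = A0 m # map fst (netps m)"
definition "netbs m = map snd (netps m)"

lemma length_blk: "length (blk n) = n + 2"
  by (simp add: blk_def sawL_def)

lemma length_netps: "length (netps m) = 1 + (3*m+4)*(2*m+4)"
  by (simp add: netps_def length_concat length_blk sum_list_replicate algebra_simps)

lemma net_relu: "relu_net (netds m) (netAs m) (netbs m)"
  by (simp add: relu_net_def netds_def netAs_def netbs_def)

lemma d_le: "2 * real m / 2^(3*m+4) \<le> 1"
proof -
  have "real m \<le> 2^m" by (metis less_exp of_nat_le_iff of_nat_less_imp_less order_less_imp_le of_nat_numeral of_nat_power)
  also have "(2::real)^m \<le> 2^(3*m+3)" by (intro power_increasing) auto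
  finally have h0: "real m \<le> (2::real)^(3*m+3)" .
  have e: "(2::real)^(3*m+4) = 2*2^(3*m+3)" by (simp add: power_add)
  have "2 * real m \<le> (2::real)^(3*m+4)" using h0 e by linarith
  then show ?thesis by (subst divide_le_eq_1) auto
qed

lemma net_realize: assumes "x \<ge> 0"
  shows "realize (netds m) (netAs m) (netbs m) x
     = (sq (2*m+2) ^^ (3*m+4)) (1 - min (x / 2^(3*m+4)) (2 * real m / 2^(3*m+4)))"
proof -
  define N :: real where "N = 2^(3*m+4)"
  define d where "d = 2 * real m / N"
  define a where "a = x / N"
  have a0: "a \<ge> 0" using assms by (simp add: a_def N_def)
  have mv: "matvec (A0 m) 1 (\<lambda>_. x) = st a a 0 0"
    by (rule ext) (simp add: matvec_def A0_def st_def a_def N_def)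
  have z: "1 - a + max (a - d) 0 = 1 - min a d" by (simp add: max_def min_def)
  have zr: "0 \<le> 1 - min a d" "1 - min a d \<le> 1"
  proof -
    have "d \<le> 1" using d_le by (simp add: d_def N_def)
    moreover have "0 \<le> d" by (simp add: d_def N_def)
    ultimately show "0 \<le> 1 - min a d" "1 - min a d \<le> 1" using a0 by auto
  qed
  have "realize (netds m) (netAs m) (netbs m) x = run (netps m) (st a a 0 0) 0"
    unfolding realize_def netds_def netAs_def netbs_def using hidden_run[of "netps m"] mv
    by simp
  also have "\<dots> = run (concat (replicate (3*m+4) (blk (2*m+2)))) (st (1 - min a d) (1 - min a d) (1 - min a d) 0) 0"
  proof -
    have "netps m = (inA, inb d) # concat (replicate (3*m+4) (blk (2*m+2)))"
      by (simp add: netps_def d_def N_def)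
    then show ?thesis unfolding run_Cons fst_conv snd_conv using lay_in[OF a0, of d] z
      by (simp add: run_Cons)
  qed
  also have "\<dots> = (sq (2*m+2) ^^ (3*m+4)) (1 - min a d)"
    using run_blks[OF zr] by (simp add: st_def)
  finally show ?thesis by (simp add: a_def d_def N_def)
qed



lemma set_netds: "set (netds m) \<subseteq> {1, 4}"
proof -
  have "\<And>x. x \<in> set (replicate (length (netps m)) (4::nat)) \<Longrightarrow> x = 4" by (simp add: in_set_replicate)
  then show ?thesis unfolding netds_def by (auto simp del: set_replicate)
qed

lemma netds_le: "i < length (netds m) \<Longrightarrow> netds m ! i \<le> 4"
proof -
  assume "i < length (netds m)"
  then have "netds m ! i \<in> set (netds m)" by (rule nth_mem)
  then have "netds m ! i \<in> {1,4}" using set_netds by blast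
  then show ?thesis by auto
qed

lemma net_width_le: "net_width (netds m) \<le> 4"
  unfolding net_width_def
proof (rule Max.boundedI)
  show "finite (set (netds m))" by simp
  show "set (netds m) \<noteq> {}" by (simp add: netds_def)
  show "\<And>a. a \<in> set (netds m) \<Longrightarrow> a \<le> 4" using set_netds[of m] by auto
qed

lemma card_le16: "(a::nat) \<le> 4 \<Longrightarrow> b \<le> 4 \<Longrightarrow> card {(i,j). (i::nat) < a \<and> (j::nat) < b \<and> P i j} \<le> 16"
proof -
  assume "a \<le> 4" "b \<le> 4"
  then have "{(i,j). i < a \<and> j < b \<and> P i j} \<subseteq> {..<4} \<times> {..<4::nat}" by auto
  then have "card {(i,j). (i::nat) < a \<and> (j::nat) < b \<and> P i j} \<le> card ({..<4::nat} \<times> {..<4::nat})"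
    by (intro card_mono) auto
  then show ?thesis by (simp add: card_cartesian_product)
qed

lemma card_le4: "(a::nat) \<le> 4 \<Longrightarrow> card {j. j < a \<and> P j} \<le> 4"
proof -
  assume "a \<le> 4"
  then have "{j. j < a \<and> P j} \<subseteq> {..<4::nat}" by auto
  then have "card {j. j < a \<and> P j} \<le> card {..<4::nat}" by (intro card_mono) auto
  then show ?thesis by simp
qed

lemma net_size_le: "net_size (netds m) (netAs m) (netbs m) \<le> 16 * (length (netps m) + 1) + 4 * length (netps m)"
proof -
  have lds: "length (netds m) = length (netps m) + 2" by (simp add: netds_def)
  have lA: "length (netAs m) = length (netps m) + 1" by (simp add: netAs_def)
  have lb: "length (netbs m) = length (netps m)" by (simp add: netbs_def)
  have s1: "(\<Sum>k<length (netAs m). card {(i, j). i < netds m ! (k + 1) \<and> j < netds m ! k \<and> (netAs m ! k) i j \<noteq> 0})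
      \<le> (\<Sum>k<length (netAs m). 16)"
    by (intro sum_mono card_le16 netds_le) (auto simp: lds lA)
  have s2: "(\<Sum>k<length (netbs m). card {j. j < netds m ! (k + 1) \<and> (netbs m ! k) j \<noteq> 0})
      \<le> (\<Sum>k<length (netbs m). 4)"
    by (intro sum_mono card_le4 netds_le) (auto simp: lds lb)
  show ?thesis unfolding net_size_def using s1 s2 lA lb by simp
qed

lemma bnd_sawA: "\<bar>sawA j i k\<bar> \<le> 4"
proof -
  have "(1::real) \<le> 4^j" by simp
  then have "2/4^j \<le> (2::real)/1" "4/4^j \<le> (4::real)/1" by (intro divide_left_mono; simp)+
  then have "2/4^j \<le> (4::real)" "4/4^j \<le> (4::real)" by auto
  then show ?thesis by (auto simp: sawA_def)
qed

lemma bnd_st: "\<bar>a\<bar> \<le> 4 \<Longrightarrow> \<bar>b\<bar> \<le> 4 \<Longrightarrow> \<bar>c\<bar> \<le> 4 \<Longrightarrow> \<bar>d\<bar> \<le> 4 \<Longrightarrow> \<bar>st a b c d j\<bar> \<le> 4"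
  by (simp add: st_def)

lemma bnd_netps: "p \<in> set (netps m) \<Longrightarrow> (\<forall>i j. \<bar>fst p i j\<bar> \<le> 4) \<and> (\<forall>j. \<bar>snd p j\<bar> \<le> 4)"
proof -
  assume p: "p \<in> set (netps m)"
  have d0: "0 \<le> 2 * real m / 2^(3*m+4)" by simp
  have d: "\<bar>2 * real m / 2^(3*m+4)\<bar> \<le> 4" using d_le[of m] d0 by linarith
  have "p = (inA, inb (2 * real m / 2^(3*m+4))) \<or> p \<in> set (blk (2*m+2))"
    using p by (auto simp: netps_def)
  then show ?thesis
  proof
    assume "p = (inA, inb (2 * real m / 2^(3*m+4)))"
    then show ?thesis using d by (auto simp: inA_def inb_def intro!: bnd_st)
  next
    assume "p \<in> set (blk (2*m+2))"
    then have "p \<in> (\<lambda>j. (sawA j, sawb)) ` set [1..<Suc (2*m+2)] \<or> p = (finA, finb) \<or> p = (clA, clb)"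
      by (auto simp: blk_def sawL_def)
    then show ?thesis
      by (auto simp: bnd_sawA sawb_def finA_def finb_def clA_def clb_def intro!: bnd_st)
  qed
qed

lemma net_params: "params_bounded (netds m) (netAs m) (netbs m) 4"
proof -
  have A: "\<And>M i j. M \<in> set (netAs m) \<Longrightarrow> \<bar>M i j\<bar> \<le> 4"
  proof -
    fix M i j assume "M \<in> set (netAs m)"
    then have "M = A0 m \<or> (\<exists>p \<in> set (netps m). M = fst p)" by (auto simp: netAs_def)
    then show "\<bar>M i j\<bar> \<le> 4"
    proof
      assume "M = A0 m"
      have h1: "1 / (2::real)^(3*m+4) \<le> 1/1" by (intro divide_left_mono) auto
      have h2: "1 / (2::real)^(3*m+4) \<le> 4" using h1 by linarith
      show ?thesis using \<open>M = A0 m\<close> h2 by (auto simp: A0_def)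
    next
      assume "\<exists>p \<in> set (netps m). M = fst p"
      then show ?thesis using bnd_netps by blast
    qed
  qed
  have B: "\<And>b j. b \<in> set (netbs m) \<Longrightarrow> \<bar>b j\<bar> \<le> 4"
    using bnd_netps by (auto simp: netbs_def)
  show ?thesis unfolding params_bounded_def
  proof (intro conjI allI impI)
    fix k i j assume "k < length (netAs m)"
    then have "netAs m ! k \<in> set (netAs m)" by (rule nth_mem)
    then show "\<bar>(netAs m ! k) i j\<bar> \<le> 4" by (rule A)
  next
    fix k j assume "k < length (netbs m)"
    then have "netbs m ! k \<in> set (netbs m)" by (rule nth_mem)
    then show "\<bar>(netbs m ! k) j\<bar> \<le> 4" by (rule B)
  qed
qed



lemma L_le: assumes "m \<ge> 2" shows "length (netps m) \<le> 21 * (m*m)"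
proof -
  have a: "2*m \<le> m*m" using assms by simp
  have b: "4 \<le> m*m" using mult_le_mono[OF assms assms] by simp
  have "length (netps m) = 6*(m*m) + 20*m + 17" by (simp add: length_netps algebra_simps)
  then show ?thesis using a b by linarith
qed

lemma Cbound: fixes l l2 :: real and p :: nat
  assumes "0 < l2" "l2 < 1" "l2 \<le> l" "1 \<le> p" "p \<le> 3"
  shows "2000 \<le> (2000 / l2^3) * l^p"
proof -
  have "l2^3 \<le> l2^p" using assms by (intro power_decreasing) auto
  also have "\<dots> \<le> l^p" using assms by (intro power_mono) auto
  finally have "l2^3 \<le> l^p" .
  then show ?thesis using assms by (simp add: field_simps)
qed

theorem lemmaC3:
  shows "\<exists>C>0. \<forall>m::nat. m \<ge> 2 \<longrightarrow>
    (\<exists>ds As bs. relu_net ds As bs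
       \<and> real (net_depth bs) \<le> C * real m ^ 2 * (ln (real m)) ^ 2
       \<and> real (net_width ds) \<le> C * real m * ln (real m)
       \<and> real (net_size ds As bs) \<le> C * real m ^ 3 * (ln (real m)) ^ 3
       \<and> params_bounded ds As bs C
       \<and> (\<forall>x::real. x \<ge> 0 \<longrightarrow> \<bar>realize ds As bs x - exp (- x)\<bar> \<le> 1 / 2 ^ m))"
proof (intro exI[of _ "2000 / ln (2::real) ^ 3"] conjI allI impI)
  define C :: real where "C = 2000 / ln 2 ^ 3"
  define l2 :: real where "l2 = ln 2"
  have l2: "0 < l2" "l2 < 1" using ln_2_less_1 by (auto simp: l2_def)
  show "0 < 2000 / ln (2::real) ^ 3" using l2 by (simp add: l2_def)
  fix m :: nat assume m: "2 \<le> m"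
  define l where "l = ln (real m)"
  have ll: "l2 \<le> l" using m by (simp add: l_def l2_def)
  have K1: "2000 \<le> C * l" using Cbound[OF l2 ll, of 1] by (simp add: C_def l2_def)
  have K2: "2000 \<le> C * l^2" using Cbound[OF l2 ll, of 2] by (simp add: C_def l2_def)
  have K3: "2000 \<le> C * l^3" using Cbound[OF l2 ll, of 3] by (simp add: C_def l2_def)
  have mr: "2 \<le> real m" using m by simp
  have Lr: "real (length (netps m)) \<le> 21 * (real m)^2"
    using L_le[OF m] by (simp add: power2_eq_square) (metis of_nat_le_iff of_nat_mult of_nat_numeral)
  show "\<exists>ds As bs. relu_net ds As bs
       \<and> real (net_depth bs) \<le> 2000 / ln 2 ^ 3 * real m ^ 2 * (ln (real m)) ^ 2
       \<and> real (net_width ds) \<le> 2000 / ln 2 ^ 3 * real m * ln (real m)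
       \<and> real (net_size ds As bs) \<le> 2000 / ln 2 ^ 3 * real m ^ 3 * (ln (real m)) ^ 3
       \<and> params_bounded ds As bs (2000 / ln 2 ^ 3)
       \<and> (\<forall>x::real. x \<ge> 0 \<longrightarrow> \<bar>realize ds As bs x - exp (- x)\<bar> \<le> 1 / 2 ^ m)"
  proof (intro exI conjI allI impI)
    show "relu_net (netds m) (netAs m) (netbs m)" by (rule net_relu)
    have "real (net_depth (netbs m)) = real (length (netps m))" by (simp add: net_depth_def netbs_def)
    also have "\<dots> \<le> 2000 * real m^2" using Lr by simp
    also have "\<dots> \<le> (C * l^2) * real m^2" using K2 by (intro mult_right_mono) auto
    finally show "real (net_depth (netbs m)) \<le> 2000 / ln 2 ^ 3 * real m ^ 2 * (ln (real m)) ^ 2"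
      by (simp add: C_def l_def algebra_simps)
    have "real (net_width (netds m)) \<le> 4" using net_width_le[of m] by simp
    also have "\<dots> \<le> 2000 * 1" by simp
    also have "\<dots> \<le> (C * l) * real m" using K1 mr by (intro mult_mono) auto
    finally show "real (net_width (netds m)) \<le> 2000 / ln 2 ^ 3 * real m * ln (real m)"
      by (simp add: C_def l_def algebra_simps)
    have "real (net_size (netds m) (netAs m) (netbs m)) \<le> real (16 * (length (netps m) + 1) + 4 * length (netps m))"
      using net_size_le[of m] by linarith
    also have "\<dots> = 20 * real (length (netps m)) + 16" by simp
    also have "\<dots> \<le> 420 * real m^2 + 16" using Lr by simp
    also have "\<dots> \<le> 2000 * real m^3"
    proof -
      have "4 \<le> real m^2" using mr by (metis power_mono zero_le_numeral power2_eq_square numeral_times_numeral semiring_norm(12) semiring_norm(13) num.exhaust  real_sqrt_four real_sqrt_le_iff real_sqrt_pow2 zero_le_numeral) 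
      moreover have "real m^2 \<le> real m^3" using mr by (simp add: power_increasing)
      ultimately show ?thesis by linarith
    qed
    also have "\<dots> \<le> (C * l^3) * real m^3" using K3 by (intro mult_right_mono) auto
    finally show "real (net_size (netds m) (netAs m) (netbs m)) \<le> 2000 / ln 2 ^ 3 * real m ^ 3 * (ln (real m)) ^ 3"
      by (simp add: C_def l_def algebra_simps)
    have p3: "l2^3 \<le> 1" using l2 by (intro power_le_one) auto
    have "2000/1 \<le> 2000 / l2^3" using l2 p3 by (intro divide_left_mono) auto
    then have "4 \<le> C" by (simp add: C_def l2_def)
    then show "params_bounded (netds m) (netAs m) (netbs m) (2000 / ln 2 ^ 3)"
      using net_params[of m] unfolding params_bounded_def C_def
      by (meson order_trans)
    fix x :: real assume x: "0 \<le> x"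
    show "\<bar>realize (netds m) (netAs m) (netbs m) x - exp (- x)\<bar> \<le> 1 / 2 ^ m"
      using net_realize[OF x, of m] final_err[OF m x] by simp
  qed
qed

end
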